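(* Let $(X_f,G)$ be a semicocycle extension of a minimal equicontinuous system $(\mathbb{T},G)$ with $\mathbb{T}$ metrizable. Suppose that $D_f$ is countable, that $G\theta\cap D_f$ is finite for every $\theta\in\mathbb{T}$, and that $G$ acts locally almost freely on every $\theta\in D_f$. Then $(X_f,G)$ is tame.
   Context: Semicocycle setting: $G$ topological group acting jointly continuously, minimally (all orbits dense) and equicontinuously on compact Hausdorff $\mathbb{T}$; $E(\mathbb{T})$ Ellis semigroup (closure of $\{\theta\mapsto g\theta\}$ in $\mathbb{T}^{\mathbb{T}}$). $K$ compact Hausdorff; $f\colon G\theta_0\to K$ continuous with $\overline{G\theta_0}=\mathbb{T}$; $F=\overline{\operatorname{gr}f}\subseteq\mathbb{T}\times K$, $F(\theta)=\{k:(\theta,k)\in F\}$, $D_f=\{\theta:\#F(\theta)>1\}$; $\theta_1\sim\theta_2$ iff $F(\xi\theta_1)=F(\xi\theta_2)$ for all $\xi\in E(\mathbb{T})$; $f$ invariant under no rotation ($\sim$ trivial). $X_f\subseteq K^G$ is the closure of $\{\sigma^h f\}$, $f\equiv(f(g\theta_0))_g$, $\sigma^h((x_g)_g)=(x_{gh})_g$. Local almost freeness: $\operatorname{Stab}_G(\theta)=\{g:g\theta=\theta\}$; $g\overset{\theta}{\sim}g'$ iff $g,g'$ coincide on a neighbourhood of $\theta$; $G$ acts locally almost freely on $\theta$ if $\operatorname{Stab}_G(\theta)/\overset{\theta}{\sim}$ is finite. Tameness: for $A_0,A_1\subseteq X_f$, $J\subseteq G$ is an independence set if for all finite $I\subseteq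 J$ and $a\in\{0,1\}^I$, $\bigcap_{i\in I}\sigma^{i^{-1}}A_{a_i}\neq\emptyset$; $(x_0,x_1)$ is an IT-pair if every pair of neighbourhoods of $x_0,x_1$ has an infinite independence set; the system is tame iff every IT-pair has $x_0=x_1$. *)

theory Defs
  imports "HOL-Analysis.Analysis"
begin

text \<open>The acting topological group G is a type 'g of class
topological_group_add; the (possibly non-commutative) group operation is written
additively: g + h stands for gh, 0 for the identity, - g for the inverse.
The function space 'g => 'k carries the product topology (Function_Topology).\<close>

definition orbit :: "('g \<Rightarrow> 't \<Rightarrow> 't) \<Rightarrow> 't \<Rightarrow> 't set" where
  "orbit act \<theta> = range (\<lambda>g. act g \<theta>)"

definition group_action :: "('g::group_add \<Rightarrow> 't \<Rightarrow> 't) \<Rightarrow> bool" where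
  "group_action act \<longleftrightarrow> (\<forall>x. act 0 x = x) \<and> (\<forall>g h x. act (g + h) x = act g (act h x))"

definition jointly_continuous_action :: "('g::topological_space \<Rightarrow> 't::topological_space \<Rightarrow> 't) \<Rightarrow> bool" where
  "jointly_continuous_action act \<longleftrightarrow> continuous_on UNIV (\<lambda>p::'g \<times> 't. act (fst p) (snd p))"

definition minimal_action :: "('g \<Rightarrow> 't::topological_space \<Rightarrow> 't) \<Rightarrow> bool" where
  "minimal_action act \<longleftrightarrow> (\<forall>\<theta>. closure (orbit act \<theta>) = UNIV)"

definition equicontinuous_action :: "('g \<Rightarrow> 't::metric_space \<Rightarrow> 't) \<Rightarrow> bool" where
  "equicontinuous_action act \<longleftrightarrow>
     (\<forall>\<theta>. \<forall>\<epsilon>>0. \<exists>\<delta>>0. \<forall>\<theta>' g. dist \<theta> \<theta>' < \<delta> \<longrightarrow> dist (act g \<theta>) (act g \<theta>') < \<epsilon>)"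

definition ellis_semigroup :: "('g \<Rightarrow> 't::topological_space \<Rightarrow> 't) \<Rightarrow> ('t \<Rightarrow> 't) set" where
  "ellis_semigroup act = closure (range act)"

definition graph_closure :: "('g \<Rightarrow> 't \<Rightarrow> 't) \<Rightarrow> 't \<Rightarrow> ('t::topological_space \<Rightarrow> 'k::topological_space) \<Rightarrow> ('t \<times> 'k) set" where
  "graph_closure act \<theta>0 f = closure ((\<lambda>\<theta>. (\<theta>, f \<theta>)) ` orbit act \<theta>0)"

definition fiber :: "('t \<times> 'k) set \<Rightarrow> 't \<Rightarrow> 'k set" where
  "fiber F \<theta> = {k. (\<theta>, k) \<in> F}"

definition discont_set :: "('g \<Rightarrow> 't \<Rightarrow> 't) \<Rightarrow> 't \<Rightarrow> ('t::topological_space \<Rightarrow> 'k::topological_space) \<Rightarrow> 't set" where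
  "discont_set act \<theta>0 f = {\<theta>. \<exists>k1 k2. k1 \<noteq> k2 \<and> k1 \<in> fiber (graph_closure act \<theta>0 f) \<theta> \<and> k2 \<in> fiber (graph_closure act \<theta>0 f) \<theta>}"

definition rot_equiv :: "('g \<Rightarrow> 't \<Rightarrow> 't) \<Rightarrow> 't \<Rightarrow> ('t::topological_space \<Rightarrow> 'k::topological_space) \<Rightarrow> 't \<Rightarrow> 't \<Rightarrow> bool" where
  "rot_equiv act \<theta>0 f \<theta>1 \<theta>2 \<longleftrightarrow>
     (\<forall>\<xi>\<in>ellis_semigroup act. fiber (graph_closure act \<theta>0 f) (\<xi> \<theta>1) = fiber (graph_closure act \<theta>0 f) (\<xi> \<theta>2))"

definition invariant_under_no_rotation :: "('g \<Rightarrow> 't \<Rightarrow> 't) \<Rightarrow> 't \<Rightarrow> ('t::topological_space \<Rightarrow> 'k::topological_space) \<Rightarrow> bool" where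
  "invariant_under_no_rotation act \<theta>0 f \<longleftrightarrow> (\<forall>\<theta>1 \<theta>2. rot_equiv act \<theta>0 f \<theta>1 \<theta>2 \<longrightarrow> \<theta>1 = \<theta>2)"

definition shift :: "'g::plus \<Rightarrow> ('g \<Rightarrow> 'k) \<Rightarrow> ('g \<Rightarrow> 'k)" where
  "shift h x = (\<lambda>g. x (g + h))"

definition semicocycle_point :: "('g \<Rightarrow> 't \<Rightarrow> 't) \<Rightarrow> 't \<Rightarrow> ('t \<Rightarrow> 'k) \<Rightarrow> ('g \<Rightarrow> 'k)" where
  "semicocycle_point act \<theta>0 f = (\<lambda>g. f (act g \<theta>0))"

definition semicocycle_space :: "('g::plus \<Rightarrow> 't \<Rightarrow> 't) \<Rightarrow> 't \<Rightarrow> ('t \<Rightarrow> 'k::topological_space) \<Rightarrow> ('g \<Rightarrow> 'k) set" where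
  "semicocycle_space act \<theta>0 f = closure (range (\<lambda>h. shift h (semicocycle_point act \<theta>0 f)))"

definition stabilizer :: "('g \<Rightarrow> 't \<Rightarrow> 't) \<Rightarrow> 't \<Rightarrow> 'g set" where
  "stabilizer act \<theta> = {g. act g \<theta> = \<theta>}"

definition germ_rel :: "('g \<Rightarrow> 't::topological_space \<Rightarrow> 't) \<Rightarrow> 't \<Rightarrow> ('g \<times> 'g) set" where
  "germ_rel act \<theta> = {(g, g'). \<exists>U. open U \<and> \<theta> \<in> U \<and> (\<forall>x\<in>U. act g x = act g' x)}"

definition locally_almost_free_at :: "('g \<Rightarrow> 't::topological_space \<Rightarrow> 't) \<Rightarrow> 't \<Rightarrow> bool" where
  "locally_almost_free_at act \<theta> \<longleftrightarrow>
     finite (stabilizer act \<theta> // (germ_rel act \<theta> \<inter> (stabilizer act \<theta> \<times> stabilizer act \<theta>)))"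

definition independence_set :: "('g::group_add \<Rightarrow> 'k) set \<Rightarrow> ('g \<Rightarrow> 'k) set \<Rightarrow> 'g set \<Rightarrow> bool" where
  "independence_set A0 A1 J \<longleftrightarrow>
     (\<forall>I a. finite I \<longrightarrow> I \<subseteq> J \<longrightarrow>
        (\<Inter>i\<in>I. shift (- i) ` (if a i then A1 else A0)) \<noteq> {})"

definition IT_pair :: "('g::group_add \<Rightarrow> 'k::topological_space) set \<Rightarrow> ('g \<Rightarrow> 'k) \<Rightarrow> ('g \<Rightarrow> 'k) \<Rightarrow> bool" where
  "IT_pair X x0 x1 \<longleftrightarrow> x0 \<in> X \<and> x1 \<in> X \<and>
     (\<forall>U0 U1. open U0 \<longrightarrow> open U1 \<longrightarrow> x0 \<in> U0 \<longrightarrow> x1 \<in> U1 \<longrightarrow>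
        (\<exists>J. infinite J \<and> independence_set (U0 \<inter> X) (U1 \<inter> X) J))"

definition tame :: "('g::group_add \<Rightarrow> 'k::topological_space) set \<Rightarrow> bool" where
  "tame X \<longleftrightarrow> (\<forall>x0 x1. IT_pair X x0 x1 \<longrightarrow> x0 = x1)"

end

theory Submission
  imports Defs "HOL-Library.Diagonal_Subsequence"
begin

lemma equi_subseq:
  fixes \<phi> :: "nat \<Rightarrow> 't::metric_space \<Rightarrow> 't"
  assumes cpt: "compact (UNIV :: 't set)"
    and equi: "\<And>\<theta> \<epsilon>. \<epsilon> > 0 \<Longrightarrow> \<exists>\<delta>>0. \<forall>\<theta>' n. dist \<theta> \<theta>' < \<delta> \<longrightarrow> dist (\<phi> n \<theta>) (\<phi> n \<theta>') < \<epsilon>"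
  shows "\<exists>\<sigma> \<xi>. strict_mono \<sigma> \<and> (\<forall>\<theta>. (\<lambda>k. \<phi> (\<sigma> k) \<theta>) \<longlonglongrightarrow> \<xi> \<theta>)"
proof -
  from cpt have tb: "\<forall>\<epsilon>>0. \<exists>k. finite k \<and> (UNIV::'t set) \<subseteq> (\<Union>x\<in>k. ball x \<epsilon>)"
    and cpl: "complete (UNIV::'t set)"
    unfolding compact_eq_totally_bounded by auto
  have "\<forall>\<epsilon>. \<exists>k. \<epsilon> > 0 \<longrightarrow> finite k \<and> (UNIV::'t set) \<subseteq> (\<Union>x\<in>k. ball x \<epsilon>)"
    using tb by blast
  then obtain kk where kk0: "\<forall>\<epsilon>. \<epsilon> > 0 \<longrightarrow> finite (kk \<epsilon>) \<and> (UNIV::'t set) \<subseteq> (\<Union>x\<in>kk \<epsilon>. ball x \<epsilon>)"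
    by (rule choice[THEN exE]) blast
  then have kk: "\<And>\<epsilon>. \<epsilon> > 0 \<Longrightarrow> finite (kk \<epsilon>) \<and> (UNIV::'t set) \<subseteq> (\<Union>x\<in>kk \<epsilon>. ball x \<epsilon>)"
    by blast
  define D where "D = (\<Union>m::nat. kk (1 / (real m + 1)))"
  have "finite (kk (1 / (real m + 1)))" for m :: nat
    using kk[of "1 / (real m + 1)"] by simp
  then have cD: "countable D" unfolding D_def
    by (simp add: countable_finite)
  have dense: "\<exists>d\<in>D. dist d \<theta> < \<delta>" if dpos: "\<delta> > 0" for \<theta> \<delta>
  proof -
    obtain m :: nat where "inverse (real (Suc m)) < \<delta>"
      using reals_Archimedean[OF dpos] by blast
    then have m: "1 / (real m + 1) < \<delta>" by (simp add: inverse_eq_divide add.commute)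
    have "(0::real) < 1 / (real m + 1)" by simp
    from kk[OF this] obtain x where "x \<in> kk (1 / (real m + 1))" "\<theta> \<in> ball x (1 / (real m + 1))"
      by blast
    then show ?thesis using m unfolding D_def by (intro bexI[of _ x]) auto
  qed
  have Dne: "D \<noteq> {}" using dense[of 1 undefined] by auto
  define e where "e = from_nat_into D"
  have eD: "range e = D" unfolding e_def using cD Dne by (simp add: range_from_nat_into)
  define P where "P = (\<lambda>n (s::nat\<Rightarrow>nat). convergent (\<lambda>k. \<phi> (s k) (e n)))"
  interpret subseqs P
  proof
    fix n and s :: "nat \<Rightarrow> nat" assume "strict_mono s"
    have "seq_compact (UNIV::'t set)" using cpt compact_eq_seq_compact_metric by blast
    then obtain l r where "strict_mono r" "((\<lambda>k. \<phi> (s k) (e n)) \<circ> r) \<longlonglongrightarrow> l"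
      by (meson UNIV_I seq_compactE)
    then show "\<exists>r'. strict_mono r' \<and> P n (s \<circ> r')"
      unfolding P_def convergent_def by (intro exI[of _ r]) (auto simp: o_def)
  qed
  have conv: "convergent (\<lambda>k. \<phi> (diagseq k) (e n))" for n
  proof -
    have "P n (diagseq \<circ> ((+) (Suc n)))"
      by (rule diagseq_holds) (auto simp: P_def convergent_def o_def intro: LIMSEQ_subseq_LIMSEQ[unfolded o_def])
    then obtain l where "(\<lambda>k. \<phi> (diagseq (k + Suc n)) (e n)) \<longlonglongrightarrow> l"
      unfolding P_def convergent_def by (auto simp: o_def add.commute)
    then have "(\<lambda>k. \<phi> (diagseq k) (e n)) \<longlonglongrightarrow> l"
      using LIMSEQ_offset[of "\<lambda>k. \<phi> (diagseq k) (e n)" "Suc n"] by simp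
    then show ?thesis unfolding convergent_def by blast
  qed
  have "\<exists>l. (\<lambda>k. \<phi> (diagseq k) \<theta>) \<longlonglongrightarrow> l" for \<theta>
  proof -
    have "Cauchy (\<lambda>k. \<phi> (diagseq k) \<theta>)"
    proof (rule metric_CauchyI)
      fix \<epsilon> :: real assume "\<epsilon> > 0"
      then obtain \<delta> where "\<delta> > 0" and \<delta>: "\<And>\<theta>' n. dist \<theta> \<theta>' < \<delta> \<Longrightarrow> dist (\<phi> n \<theta>) (\<phi> n \<theta>') < \<epsilon>/3"
        using equi[of "\<epsilon>/3" \<theta>] \<open>\<epsilon>>0\<close> by auto
      obtain d where "d \<in> D" "dist d \<theta> < \<delta>" using dense[OF \<open>\<delta>>0\<close>] by blast
      then obtain j where dj: "d = e j" using eD by auto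
      have "Cauchy (\<lambda>k. \<phi> (diagseq k) (e j))" using conv convergent_Cauchy by blast
      from metric_CauchyD[OF this, of "\<epsilon>/3"] \<open>\<epsilon>>0\<close> obtain M where M: "\<And>m n. m \<ge> M \<Longrightarrow> n \<ge> M \<Longrightarrow> dist (\<phi> (diagseq m) d) (\<phi> (diagseq n) d) < \<epsilon>/3"
        using dj by auto
      have dd: "dist (\<phi> n \<theta>) (\<phi> n d) < \<epsilon>/3" for n
        using \<delta>[of d n] \<open>dist d \<theta> < \<delta>\<close> by (simp add: dist_commute)
      show "\<exists>M. \<forall>m\<ge>M. \<forall>n\<ge>M. dist (\<phi> (diagseq m) \<theta>) (\<phi> (diagseq n) \<theta>) < \<epsilon>"
      proof (intro exI allI impI)
        fix m n assume "m \<ge> M" "n \<ge> M"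
        define A where "A = \<phi> (diagseq m) \<theta>"
        define B where "B = \<phi> (diagseq m) d"
        define C where "C = \<phi> (diagseq n) d"
        define E where "E = \<phi> (diagseq n) \<theta>"
        have 1: "dist A B < \<epsilon>/3" unfolding A_def B_def using dd by blast
        have 2: "dist B C < \<epsilon>/3" unfolding B_def C_def using M \<open>m\<ge>M\<close> \<open>n\<ge>M\<close> by blast
        have 3: "dist C E < \<epsilon>/3" unfolding C_def E_def using dd by (simp add: dist_commute)
        have "dist A E \<le> dist A B + dist B E" by (rule dist_triangle)
        moreover have "dist B E \<le> dist B C + dist C E" by (rule dist_triangle)
        ultimately have "dist A E < \<epsilon>" using 1 2 3 by linarith
        then show "dist (\<phi> (diagseq m) \<theta>) (\<phi> (diagseq n) \<theta>) < \<epsilon>" unfolding A_def E_def .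
      qed
    qed
    then show ?thesis using cpl completeE by blast
  qed
  then obtain \<xi> where "\<And>\<theta>. (\<lambda>k. \<phi> (diagseq k) \<theta>) \<longlonglongrightarrow> \<xi> \<theta>" by metis
  then show ?thesis using subseq_diagseq by blast
qed

lemma act_cont:
  assumes "jointly_continuous_action act"
  shows "continuous_on UNIV (act g)"
proof -
  have "continuous_on UNIV (\<lambda>x. (act (fst (g,x)) (snd (g,x))))"
    using assms unfolding jointly_continuous_action_def
    by (rule continuous_on_compose2[of UNIV _ UNIV "\<lambda>x. (g,x)"]) (auto intro!: continuous_intros)
  then show ?thesis by simp
qed

lemma ga_add: "group_action act \<Longrightarrow> act g (act h x) = act (g + h) x"
  by (simp add: group_action_def)

lemma ga_inv: "group_action act \<Longrightarrow> act (- g) (act g x) = x"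
proof -
  assume a: "group_action act"
  show ?thesis using a unfolding group_action_def by (metis left_minus)
qed

lemma xi_inj:
  fixes act :: "'g::group_add \<Rightarrow> 't::metric_space \<Rightarrow> 't"
  assumes ga: "group_action act" and eq: "equicontinuous_action act"
    and lim: "\<And>\<theta>. (\<lambda>k. act (g k) \<theta>) \<longlonglongrightarrow> \<xi> \<theta>"
  shows "inj \<xi>"
proof (rule injI)
  fix a b assume ab: "\<xi> a = \<xi> b"
  have hh: "dist a b < 2 * \<epsilon>" if "\<epsilon> > 0" for \<epsilon>
  proof -
    obtain \<delta> where "\<delta> > 0" and \<delta>: "\<And>\<theta>' h. dist (\<xi> a) \<theta>' < \<delta> \<Longrightarrow> dist (act h (\<xi> a)) (act h \<theta>') < \<epsilon>"
      using eq \<open>\<epsilon>>0\<close> unfolding equicontinuous_action_def by blast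
    have "eventually (\<lambda>k. dist (act (g k) a) (\<xi> a) < \<delta>) sequentially"
      using tendstoD[OF lim \<open>\<delta>>0\<close>] .
    moreover have "eventually (\<lambda>k. dist (act (g k) b) (\<xi> a) < \<delta>) sequentially"
      using tendstoD[OF lim \<open>\<delta>>0\<close>, of b] ab by simp
    ultimately obtain k where k1: "dist (act (g k) a) (\<xi> a) < \<delta>" and k2: "dist (act (g k) b) (\<xi> a) < \<delta>"
      using eventually_happens'[OF sequentially_bot] eventually_conj by blast
    have 1: "dist (act (- g k) (\<xi> a)) a < \<epsilon>"
      using \<delta>[of "act (g k) a" "- g k"] k1 ga_inv[OF ga] by (simp add: dist_commute)
    have 2: "dist (act (- g k) (\<xi> a)) b < \<epsilon>"
      using \<delta>[of "act (g k) b" "- g k"] k2 ga_inv[OF ga] by (simp add: dist_commute)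
    have "dist a b \<le> dist (act (- g k) (\<xi> a)) a + dist (act (- g k) (\<xi> a)) b"
      by (rule dist_triangle3)
    then show ?thesis using 1 2 by linarith
  qed
  show "a = b"
  proof (rule ccontr)
    assume "a \<noteq> b"
    then have "dist a b > 0" by simp
    then have "dist a b < 2 * (dist a b / 4)" using hh[of "dist a b / 4"] by simp
    then show False using \<open>dist a b > 0\<close> by simp
  qed
qed

lemma shift_shift: "shift k (shift h x) = shift (k + h) (x::'g::group_add \<Rightarrow> 'k)"
  by (simp add: shift_def add.assoc)

lemma shift_cont: "continuous_on UNIV (shift k :: ('g::plus \<Rightarrow> 'k::topological_space) \<Rightarrow> _)"
  unfolding shift_def by (intro continuous_on_coordinatewise_then_product continuous_on_product_coordinates)

lemma shift_invariant:
  fixes act :: "'g::group_add \<Rightarrow> 't \<Rightarrow> 't"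
  assumes "y \<in> semicocycle_space act \<theta>0 f"
  shows "shift k y \<in> semicocycle_space act \<theta>0 (f::'t \<Rightarrow> 'k::topological_space)"
proof -
  let ?R = "range (\<lambda>h. shift h (semicocycle_point act \<theta>0 f))"
  have "shift k ` closure ?R \<subseteq> closure ?R"
  proof (rule image_closure_subset)
    show "continuous_on (closure ?R) (shift k)" using shift_cont continuous_on_subset by blast
    have "shift k ` ?R \<subseteq> ?R" by (auto simp: shift_shift)
    then show "shift k ` ?R \<subseteq> closure ?R"
      using closure_subset by blast
  qed auto
  then show ?thesis using assms unfolding semicocycle_space_def by blast
qed

lemma point_theta:
  fixes act :: "'g::topological_group_add \<Rightarrow> 't::topological_space \<Rightarrow> 't" and f :: "'t \<Rightarrow> 'k::t2_space"
  assumes cpt: "compact (UNIV :: 't set)"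
    and jc: "jointly_continuous_action act" and ga: "group_action act"
    and y: "y \<in> semicocycle_space act \<theta>0 f"
  shows "\<exists>\<theta>. (\<forall>g. (act g \<theta>, y g) \<in> graph_closure act \<theta>0 f) \<and>
              (\<forall>g g'. (g, g') \<in> germ_rel act \<theta> \<longrightarrow> y g = y g')"
proof -
  define x0 where "x0 = semicocycle_point act \<theta>0 f"
  define R where "R = range (\<lambda>h. shift h x0)"
  have yR: "y \<in> closure R" using y unfolding R_def x0_def semicocycle_space_def .
  define C where "C = (\<lambda>W. closure {act h \<theta>0 | h. shift h x0 \<in> W})"
  define I where "I = {W. open W \<and> y \<in> W}"
  have hit: "\<exists>h. shift h x0 \<in> W" if "open W" "y \<in> W" for W
  proof -
    have "W \<inter> closure R \<noteq> {}" using that yR by blast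
    then have "W \<inter> R \<noteq> {}" using open_Int_closure_eq_empty[OF \<open>open W\<close>] by blast
    then show ?thesis unfolding R_def by blast
  qed
  have "UNIV \<inter> (\<Inter>W\<in>I. C W) \<noteq> {}"
  proof (rule compact_imp_fip_image[OF cpt])
    show "\<And>W. W \<in> I \<Longrightarrow> closed (C W)" unfolding C_def by simp
    fix I' assume "finite I'" "I' \<subseteq> I"
    then have "open (\<Inter>I')" "y \<in> \<Inter>I'" unfolding I_def by auto
    then obtain h where h: "shift h x0 \<in> \<Inter>I'" using hit by blast
    have "act h \<theta>0 \<in> C W" if "W \<in> I'" for W
    proof -
      have "shift h x0 \<in> W" using h that by blast
      then have "act h \<theta>0 \<in> {act h \<theta>0 | h. shift h x0 \<in> W}" by blast
      then show ?thesis unfolding C_def by (rule closure_subset[THEN subsetD])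
    qed
    then show "UNIV \<inter> (\<Inter>W\<in>I'. C W) \<noteq> {}" by blast
  qed
  then obtain \<theta> where "\<theta> \<in> (\<Inter>W\<in>I. C W)" by blast
  then have \<theta>: "\<And>W. open W \<Longrightarrow> y \<in> W \<Longrightarrow> \<theta> \<in> C W" unfolding I_def by blast
  have near: "\<exists>h. shift h x0 \<in> W \<and> act h \<theta>0 \<in> A" if "open W" "y \<in> W" "open A" "\<theta> \<in> A" for W A
  proof -
    have "\<theta> \<in> closure {act h \<theta>0 | h. shift h x0 \<in> W}" using \<theta> that unfolding C_def by blast
    then have "A \<inter> {act h \<theta>0 | h. shift h x0 \<in> W} \<noteq> {}"
      using open_Int_closure_eq_empty[OF \<open>open A\<close>] that by blast
    then show ?thesis by blast
  qed
  have sx: "shift h x0 g = f (act g (act h \<theta>0))" for h g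
    unfolding x0_def shift_def semicocycle_point_def using ga by (simp add: ga_add)
  have P1: "(act g \<theta>, y g) \<in> graph_closure act \<theta>0 f" for g
  proof (rule ccontr)
    let ?F = "graph_closure act \<theta>0 f"
    assume "(act g \<theta>, y g) \<notin> ?F"
    then have n: "(act g \<theta>, y g) \<in> - ?F" by simp
    have oF: "open (- ?F)" unfolding graph_closure_def by (rule open_Compl) simp
    obtain A B where AB0: "open A" "open B" "(act g \<theta>, y g) \<in> A \<times> B" "A \<times> B \<subseteq> - ?F"
      by (rule open_prod_elim[OF oF n])
    then have AB: "open A" "open B" "act g \<theta> \<in> A" "y g \<in> B" "A \<times> B \<subseteq> - ?F" by auto
    define W where "W = (\<lambda>x. x g) -` B"
    have oW: "open W" unfolding W_def by (rule open_vimage[OF \<open>open B\<close>]) simp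
    have oA: "open (act g -` A)" by (rule open_vimage[OF \<open>open A\<close> act_cont[OF jc]])
    obtain h where h: "shift h x0 \<in> W" "act h \<theta>0 \<in> act g -` A"
      using near[OF oW _ oA] AB unfolding W_def by auto
    have "act g (act h \<theta>0) \<in> orbit act \<theta>0"
      unfolding orbit_def using ga by (simp add: ga_add)
    then have "(act g (act h \<theta>0), f (act g (act h \<theta>0))) \<in> (\<lambda>\<theta>. (\<theta>, f \<theta>)) ` orbit act \<theta>0"
      by (rule imageI)
    then have "(act g (act h \<theta>0), f (act g (act h \<theta>0))) \<in> ?F"
      unfolding graph_closure_def by (rule closure_subset[THEN subsetD])
    moreover have "(act g (act h \<theta>0), f (act g (act h \<theta>0))) \<in> A \<times> B"
      using h sx unfolding W_def by auto
    ultimately show False using AB(5) by (auto simp del: mem_Times_iff)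
  qed
  have P2: "y g = y g'" if "(g, g') \<in> germ_rel act \<theta>" for g g'
  proof (rule ccontr)
    assume "y g \<noteq> y g'"
    then obtain B B' where BB: "open B" "open B'" "y g \<in> B" "y g' \<in> B'" "B \<inter> B' = {}"
      using hausdorff[OF \<open>y g \<noteq> y g'\<close>] by blast
    have "\<exists>U. open U \<and> \<theta> \<in> U \<and> (\<forall>x\<in>U. act g x = act g' x)"
      using that unfolding germ_rel_def by simp
    then obtain U where U: "open U" "\<theta> \<in> U" "\<And>x. x \<in> U \<Longrightarrow> act g x = act g' x"
      by blast
    define W where "W = (\<lambda>x. x g) -` B \<inter> (\<lambda>x. x g') -` B'"
    have oW: "open W" unfolding W_def
      by (intro open_Int open_vimage[OF \<open>open B\<close>] open_vimage[OF \<open>open B'\<close>]) simp_all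
    obtain h where h: "shift h x0 \<in> W" "act h \<theta>0 \<in> U"
      using near[OF oW _ U(1,2)] BB unfolding W_def by auto
    have "f (act g (act h \<theta>0)) \<in> B" "f (act g' (act h \<theta>0)) \<in> B'"
      using h(1) sx unfolding W_def by auto
    moreover have "act g (act h \<theta>0) = act g' (act h \<theta>0)" using U(3) h(2) by blast
    ultimately show False using BB by auto
  qed
  show ?thesis using P1 P2 by blast
qed

lemma germ_equiv: "equiv S (germ_rel act \<theta> \<inter> S \<times> S)"
proof (rule equivI)
  show "refl_on S (germ_rel act \<theta> \<inter> S \<times> S)"
    unfolding refl_on_def germ_rel_def by (auto intro: exI[of _ UNIV])
  show "sym (germ_rel act \<theta> \<inter> S \<times> S)"
    unfolding sym_def germ_rel_def by fastforce
  show "trans (germ_rel act \<theta> \<inter> S \<times> S)"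
  proof (rule transI)
    fix a b c assume ab: "(a, b) \<in> germ_rel act \<theta> \<inter> S \<times> S" and bc: "(b, c) \<in> germ_rel act \<theta> \<inter> S \<times> S"
    obtain U where U: "open U" "\<theta> \<in> U" "\<forall>x\<in>U. act a x = act b x" using ab unfolding germ_rel_def by auto
    obtain V where V: "open V" "\<theta> \<in> V" "\<forall>x\<in>V. act b x = act c x" using bc unfolding germ_rel_def by auto
    have "open (U \<inter> V)" "\<theta> \<in> U \<inter> V" "\<forall>x\<in>U \<inter> V. act a x = act c x" using U V by auto
    then show "(a, c) \<in> germ_rel act \<theta> \<inter> S \<times> S" using ab bc unfolding germ_rel_def by blast
  qed
qed blast

lemma finite_germ_classes:
  fixes act :: "'g::topological_group_add \<Rightarrow> 't::topological_space \<Rightarrow> 't"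
  assumes ga: "group_action act" and jc: "jointly_continuous_action act"
    and fin: "finite (orbit act \<theta> \<inter> D)"
    and laf: "\<And>p. p \<in> D \<Longrightarrow> locally_almost_free_at act p"
  shows "finite ({g. act g \<theta> \<in> D} // (germ_rel act \<theta> \<inter> {g. act g \<theta> \<in> D} \<times> {g. act g \<theta> \<in> D}))"
proof -
  define S where "S = {g. act g \<theta> \<in> D}"
  define E where "E = germ_rel act \<theta> \<inter> S \<times> S"
  define P where "P = orbit act \<theta> \<inter> D"
  define Ep where "Ep = (\<lambda>p. germ_rel act p \<inter> stabilizer act p \<times> stabilizer act p)"
  define Q where "Q = (\<lambda>p. stabilizer act p // Ep p)"
  have gp: "\<exists>g. act g \<theta> = p" if "p \<in> P" for p using that unfolding P_def orbit_def by auto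
  define gp where "gp = (\<lambda>p. SOME g. act g \<theta> = p)"
  have gpp: "act (gp p) \<theta> = p" if "p \<in> P" for p
    unfolding gp_def using someI_ex[OF gp[OF that]] .
  define h where "h = (\<lambda>(p, C). E `` {(SOME s. s \<in> C) + gp p})"
  have finQ: "finite (Sigma P Q)"
    using fin laf unfolding P_def Q_def Ep_def locally_almost_free_at_def by (intro finite_SigmaI) auto
  have eqE: "equiv S E" unfolding E_def by (rule germ_equiv)
  have sub: "S // E \<subseteq> h ` Sigma P Q"
  proof
    fix X assume "X \<in> S // E"
    then obtain g where g: "g \<in> S" "X = E `` {g}" by (rule quotientE)
    define p where "p = act g \<theta>"
    have pP: "p \<in> P" using g unfolding p_def P_def S_def orbit_def by auto
    define s where "s = g + - gp p"
    have gs: "g = s + gp p" unfolding s_def by (simp add: add.assoc)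
    have "act s p = act s (act (gp p) \<theta>)" using gpp[OF pP] by simp
    also have "\<dots> = act (s + gp p) \<theta>" using ga by (simp add: ga_add)
    also have "\<dots> = p" by (metis gs p_def)
    finally have sstab: "s \<in> stabilizer act p" unfolding stabilizer_def by simp
    define C where "C = Ep p `` {s}"
    have CQ: "C \<in> Q p" unfolding C_def Q_def using sstab by (rule quotientI)
    have eqp: "equiv (stabilizer act p) (Ep p)" unfolding Ep_def by (rule germ_equiv)
    have sC: "s \<in> C" unfolding C_def using equiv_class_self[OF eqp sstab] .
    define s' where "s' = (SOME s. s \<in> C)"
    have s'C: "s' \<in> C" unfolding s'_def using sC by (rule someI)
    then have ss': "(s, s') \<in> Ep p" unfolding C_def by simp
    then have s'stab: "s' \<in> stabilizer act p" unfolding Ep_def by auto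
    obtain U where U: "open U" "p \<in> U" "\<forall>x\<in>U. act s x = act s' x"
      using ss' unfolding Ep_def germ_rel_def by auto
    define g' where "g' = s' + gp p"
    have oU': "open (act (gp p) -` U)" by (rule open_vimage[OF U(1) act_cont[OF jc]])
    have "\<theta> \<in> act (gp p) -` U" using gpp[OF pP] U(2) by simp
    moreover have "\<forall>x\<in>act (gp p) -` U. act g x = act g' x"
      using U(3) ga unfolding gs g'_def by (simp add: ga_add[symmetric])
    ultimately have "(g, g') \<in> germ_rel act \<theta>" using oU' unfolding germ_rel_def by blast
    moreover have "g' \<in> S"
      using s'stab gpp[OF pP] pP ga unfolding g'_def S_def stabilizer_def P_def
      by (simp add: ga_add[symmetric])
    ultimately have "(g, g') \<in> E" using g unfolding E_def by blast
    then have "X = E `` {g'}" using g equiv_class_eq[OF eqE] by simp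
    then show "X \<in> h ` Sigma P Q"
      unfolding h_def g'_def s'_def using pP CQ by (auto intro!: image_eqI[of _ _ "(p, C)"])
  qed
  show ?thesis using finite_subset[OF sub finite_imageI[OF finQ]] unfolding S_def E_def .
qed

lemma regular_sep:
  fixes a :: "'k::t2_space"
  assumes cpt: "compact (UNIV :: 'k set)" and "closed C" "a \<notin> C"
  shows "\<exists>U V. open U \<and> open V \<and> a \<in> U \<and> C \<subseteq> V \<and> U \<inter> V = {}"
proof -
  have H: "Hausdorff_space (euclidean :: 'k topology)"
    unfolding Hausdorff_space_def disjnt_def using hausdorff by auto
  have "compact_space (euclidean :: 'k topology)" using cpt by (simp add: compact_space_def)
  then have "regular_space (euclidean :: 'k topology)"
    using H compact_Hausdorff_imp_regular_space by blast
  then show ?thesis using assms unfolding regular_space_def disjnt_def by auto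
qed

lemma sep_closed_nbhds:
  fixes a b :: "'k::t2_space"
  assumes cpt: "compact (UNIV :: 'k set)" and "a \<noteq> b"
  shows "\<exists>P0 P1 V0 V1. open P0 \<and> open P1 \<and> closed V0 \<and> closed V1 \<and> a \<in> P0 \<and> P0 \<subseteq> V0
     \<and> b \<in> P1 \<and> P1 \<subseteq> V1 \<and> V0 \<inter> V1 = {}"
proof -
  obtain O0 O1 where O: "open O0" "open O1" "a \<in> O0" "b \<in> O1" "O0 \<inter> O1 = {}"
    using hausdorff[OF assms(2)] by blast
  obtain P0 Q0 where PQ0: "open P0" "open Q0" "a \<in> P0" "- O0 \<subseteq> Q0" "P0 \<inter> Q0 = {}"
    using regular_sep[OF cpt, of "- O0" a] O by auto
  obtain P1 Q1 where PQ1: "open P1" "open Q1" "b \<in> P1" "- O1 \<subseteq> Q1" "P1 \<inter> Q1 = {}"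
    using regular_sep[OF cpt, of "- O1" b] O by auto
  have "- Q0 \<inter> - Q1 = {}" using PQ0(4) PQ1(4) O(5) by blast
  moreover have "P0 \<subseteq> - Q0" "P1 \<subseteq> - Q1" using PQ0 PQ1 by auto
  moreover have "closed (- Q0)" "closed (- Q1)" using PQ0 PQ1 by auto
  ultimately show ?thesis using PQ0 PQ1 by blast
qed

lemma compact_fun_UNIV:
  assumes "compact (UNIV :: 'b::topological_space set)"
  shows "compact (UNIV :: ('a \<Rightarrow> 'b) set)"
proof -
  have c: "compact_space (euclidean :: 'b topology)"
    using assms by (simp add: compact_space_def)
  have "compact_space (product_topology (\<lambda>i::'a. (euclidean::'b topology)) UNIV)"
    using c by (simp add: compact_space_product_topology)
  then show ?thesis
    by (simp add: euclidean_product_topology compact_space_def)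
qed

lemma uncountable_bool_seq: "\<not> countable (UNIV :: (nat \<Rightarrow> bool) set)"
proof
  assume "countable (UNIV :: (nat \<Rightarrow> bool) set)"
  then obtain f :: "nat \<Rightarrow> nat \<Rightarrow> bool" where "range f = UNIV"
    using uncountable_def by blast
  then obtain n where "f n = (\<lambda>n. \<not> f n n)" by (metis UNIV_I imageE)
  then show False by (metis)
qed

theorem mainTheorem10:
  fixes act :: "'g::topological_group_add \<Rightarrow> 't::metric_space \<Rightarrow> 't"
    and \<theta>0 :: 't
    and f :: "'t \<Rightarrow> 'k::t2_space"
  assumes "compact (UNIV :: 't set)"
    and "compact (UNIV :: 'k set)"
    and "group_action act"
    and "jointly_continuous_action act"
    and "minimal_action act"
    and "equicontinuous_action act"
    and "continuous_on (orbit act \<theta>0) f"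
    and "closure (orbit act \<theta>0) = UNIV"
    and "invariant_under_no_rotation act \<theta>0 f"
    and "countable (discont_set act \<theta>0 f)"
    and "\<And>\<theta>. finite (orbit act \<theta> \<inter> discont_set act \<theta>0 f)"
    and "\<And>\<theta>. \<theta> \<in> discont_set act \<theta>0 f \<Longrightarrow> locally_almost_free_at act \<theta>"
  shows "tame (semicocycle_space act \<theta>0 f)"
proof -
  note cT = assms(1) and cK = assms(2) and ga = assms(3) and jc = assms(4)
    and eqc = assms(6) and cD = assms(10) and finD = assms(11) and laf = assms(12)
  define X where "X = semicocycle_space act \<theta>0 f"
  define D where "D = discont_set act \<theta>0 f"
  define F where "F = graph_closure act \<theta>0 f"
  have subs: "k1 = k2" if "\<theta> \<notin> D" "k1 \<in> fiber F \<theta>" "k2 \<in> fiber F \<theta>" for \<theta> k1 k2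
    using that unfolding D_def F_def discont_set_def by blast
  have Xne: "shift 0 (semicocycle_point act \<theta>0 f) \<in> X"
    unfolding X_def semicocycle_space_def by (rule closure_subset[THEN subsetD]) simp
  have cX: "compact X"
  proof -
    have "compact (UNIV \<inter> X)" unfolding X_def semicocycle_space_def
      by (rule compact_Int_closed[OF compact_fun_UNIV[OF cK]]) simp
    then show ?thesis by simp
  qed
  show ?thesis unfolding tame_def X_def[symmetric]
  proof (intro allI impI)
    fix x0 x1 assume IT: "IT_pair X x0 x1"
    show "x0 = x1"
    proof (rule ccontr)
      assume "x0 \<noteq> x1"
      then obtain g0 where g0: "x0 g0 \<noteq> x1 g0" by auto
      obtain P0 P1 V0 V1 where PV: "open P0" "open P1" "closed V0" "closed V1" "x0 g0 \<in> P0" "P0 \<subseteq> V0"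
        "x1 g0 \<in> P1" "P1 \<subseteq> V1" "V0 \<inter> V1 = {}"
        using sep_closed_nbhds[OF cK g0] by blast
      define U0 where "U0 = (\<lambda>x. x g0) -` P0"
      define U1 where "U1 = (\<lambda>x. x g0) -` P1"
      have "open U0" unfolding U0_def by (rule open_vimage[OF PV(1)]) simp
      have "open U1" unfolding U1_def by (rule open_vimage[OF PV(2)]) simp
      obtain J where J: "infinite J" "independence_set (U0 \<inter> X) (U1 \<inter> X) J"
        using IT \<open>open U0\<close> \<open>open U1\<close> PV(5,7) unfolding IT_pair_def U0_def U1_def by blast
      obtain ii :: "nat \<Rightarrow> 'g" where ii: "inj ii" "range ii \<subseteq> J"
        using infinite_countable_subset[OF J(1)] by blast
      have equi: "\<exists>\<delta>>0. \<forall>\<theta>' n. dist \<theta> \<theta>' < \<delta> \<longrightarrow> dist (act (g0 + ii n) \<theta>) (act (g0 + ii n) \<theta>') < \<epsilon>"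
        if "\<epsilon> > 0" for \<theta> \<epsilon>
        using eqc that unfolding equicontinuous_action_def by blast
      obtain \<sigma> \<xi> where \<sigma>: "strict_mono \<sigma>" and lim: "\<And>\<theta>. (\<lambda>k. act (g0 + ii (\<sigma> k)) \<theta>) \<longlonglongrightarrow> \<xi> \<theta>"
        using equi_subseq[of "\<lambda>n. act (g0 + ii n)", OF cT equi] by blast
      define jj where "jj = ii \<circ> \<sigma>"
      define gs where "gs = (\<lambda>n. g0 + jj n)"
      have jj: "inj jj" "range jj \<subseteq> J" unfolding jj_def using ii \<sigma> strict_mono_imp_inj_on
        by (auto intro: inj_compose)
      have limg: "\<And>\<theta>. (\<lambda>k. act (gs k) \<theta>) \<longlonglongrightarrow> \<xi> \<theta>" using lim unfolding gs_def jj_def by simp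
      define PP where "PP = (\<lambda>b. if b then P1 else P0)"
      define VV where "VV = (\<lambda>b. if b then V1 else V0)"
      have PVV: "PP b \<subseteq> VV b" for b unfolding PP_def VV_def using PV by auto
      have finpat: "\<exists>y\<in>X. \<forall>n<N. y (gs n) \<in> PP (a n)" for N a
      proof (cases "N = 0")
        case True then show ?thesis using Xne by blast
      next
        case False
        define I where "I = jj ` {..<N}"
        define a' where "a' = (\<lambda>j. a (inv jj j))"
        have "finite I" "I \<subseteq> J" unfolding I_def using jj by auto
        then have "(\<Inter>i\<in>I. shift (- i) ` (if a' i then U1 \<inter> X else U0 \<inter> X)) \<noteq> {}"
          using J(2) unfolding independence_set_def by blast
        then obtain z where z: "\<And>i. i \<in> I \<Longrightarrow> z \<in> shift (- i) ` (if a' i then U1 \<inter> X else U0 \<inter> X)"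
          by blast
        have "jj 0 \<in> I" using False unfolding I_def by simp
        then obtain x where "x \<in> X" "z = shift (- jj 0) x" using z[of "jj 0"] by (auto split: if_splits)
        then have zX: "z \<in> X" unfolding X_def by (simp add: shift_invariant)
        have "z (gs n) \<in> PP (a n)" if "n < N" for n
        proof -
          have "jj n \<in> I" using that unfolding I_def by simp
          from z[OF this] obtain x where x: "x \<in> (if a' (jj n) then U1 else U0)" "z = shift (- jj n) x"
            by (auto split: if_splits)
          have "a' (jj n) = a n" unfolding a'_def using jj(1) by simp
          moreover have "z (gs n) = x g0" unfolding x(2) gs_def shift_def by (simp add: add.assoc)
          ultimately show ?thesis using x(1) unfolding PP_def U0_def U1_def by (auto split: if_splits)
        qed
        then show ?thesis using zX by blast
      qed
      have infpat: "\<exists>y\<in>X. \<forall>n. y (gs n) \<in> VV (a n)" for a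
      proof -
        have "X \<inter> (\<Inter>n\<in>UNIV. (\<lambda>y. y (gs n)) -` VV (a n)) \<noteq> {}"
        proof (rule compact_imp_fip_image[OF cX])
          show "closed ((\<lambda>y. y (gs n)) -` VV (a n))" for n
            by (rule closed_vimage) (auto simp: VV_def PV(3,4))
          fix I' :: "nat set" assume "finite I'"
          then obtain N where N: "\<And>n. n \<in> I' \<Longrightarrow> n < N" by (metis finite_nat_bounded lessThan_iff subsetD)
          obtain y where "y \<in> X" "\<forall>n<N. y (gs n) \<in> PP (a n)" using finpat by blast
          then have "y \<in> X \<inter> (\<Inter>n\<in>I'. (\<lambda>y. y (gs n)) -` VV (a n))" using N PVV by blast
          then show "X \<inter> (\<Inter>n\<in>I'. (\<lambda>y. y (gs n)) -` VV (a n)) \<noteq> {}" by blast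
        qed
        then show ?thesis by blast
      qed
      define alt where "alt = (\<lambda>(b::nat\<Rightarrow>bool) n. if even n then b (n div 2) else \<not> b (n div 2))"
      have "\<forall>b. \<exists>y. y \<in> X \<and> (\<forall>n. y (gs n) \<in> VV (alt b n))" using infpat by blast
      then obtain Y where Y: "\<And>b. Y b \<in> X" "\<And>b n. Y b (gs n) \<in> VV (alt b n)" by metis
      have "\<forall>b. \<exists>\<theta>. (\<forall>g. (act g \<theta>, Y b g) \<in> F) \<and> (\<forall>g g'. (g, g') \<in> germ_rel act \<theta> \<longrightarrow> Y b g = Y b g')"
        using point_theta[OF cT jc ga] Y(1) unfolding X_def F_def by blast
      then obtain \<Theta> where \<Theta>1: "\<And>b g. (act g (\<Theta> b), Y b g) \<in> F"
        and \<Theta>2: "\<And>b g g'. (g, g') \<in> germ_rel act (\<Theta> b) \<Longrightarrow> Y b g = Y b g'" by metis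
      have valt: "Y b (gs n) \<in> V1 \<longleftrightarrow> alt b n" for b n
        using Y(2)[of b n] PV(9) unfolding VV_def by (auto split: if_splits)
      have claimA: "\<xi> (\<Theta> b) \<in> D" for b
      proof (rule ccontr)
        assume nD: "\<xi> (\<Theta> b) \<notin> D"
        define p where "p = \<xi> (\<Theta> b)"
        have nD': "p \<notin> D" using nD unfolding p_def .
        have or: "fiber F p \<inter> V0 = {} \<or> fiber F p \<inter> V1 = {}"
        proof (rule ccontr)
          assume "\<not> (fiber F p \<inter> V0 = {} \<or> fiber F p \<inter> V1 = {})"
          then obtain k0 k1 where "k0 \<in> fiber F p" "k0 \<in> V0" "k1 \<in> fiber F p" "k1 \<in> V1" by blast
          moreover from this have "k0 = k1" using subs[OF nD'] by blast
          ultimately show False using PV(9) by blast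
        qed
        obtain c where c: "fiber F p \<inter> VV c = {}"
        proof (cases "fiber F p \<inter> V0 = {}")
          case True then show ?thesis using that[of False] unfolding VV_def by simp
        next
          case False then show ?thesis using that[of True] or unfolding VV_def by simp
        qed
        define K where "K = fst ` (F \<inter> ((UNIV::'t set) \<times> VV c))"
        have "compact (F \<inter> ((UNIV::'t set) \<times> VV c))"
        proof (rule closed_Int_compact)
          show "closed F" unfolding F_def graph_closure_def by simp
          have "compact (UNIV \<inter> V0)" "compact (UNIV \<inter> V1)"
            using compact_Int_closed[OF cK PV(3)] compact_Int_closed[OF cK PV(4)] .
          then have "compact (VV c)" unfolding VV_def by simp
          from compact_Times[OF cT this] show "compact ((UNIV::'t set) \<times> VV c)" .
        qed
        then have "compact K" unfolding K_def by (intro compact_continuous_image continuous_intros)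
        then have "open (- K)" by (simp add: compact_imp_closed open_Compl)
        moreover have "p \<notin> K" using c unfolding K_def fiber_def by auto
        ultimately have "eventually (\<lambda>k. act (gs k) (\<Theta> b) \<in> - K) sequentially"
          using topological_tendstoD[OF limg[of "\<Theta> b"], of "- K"] unfolding p_def by simp
        then obtain N where N: "\<And>n. n \<ge> N \<Longrightarrow> act (gs n) (\<Theta> b) \<notin> K"
          unfolding eventually_sequentially by auto
        obtain n where "n \<ge> N" "alt b n = c"
        proof (cases "b N = c")
          case True then show ?thesis using that[of "2 * N"] unfolding alt_def by simp
        next
          case False then show ?thesis using that[of "2 * N + 1"] unfolding alt_def by auto
        qed
        then have "Y b (gs n) \<in> VV c" using Y(2)[of b n] by simp
        then have "act (gs n) (\<Theta> b) \<in> K" unfolding K_def using \<Theta>1[of "gs n" b]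
          by (auto intro!: image_eqI[of _ fst "(act (gs n) (\<Theta> b), Y b (gs n))"])
        then show False using N \<open>n \<ge> N\<close> by blast
      qed
      have injxi: "inj \<xi>" using xi_inj[OF ga eqc limg] .
      have cnt: "countable {\<theta>. \<xi> \<theta> \<in> D}"
      proof (rule countable_image_inj_on)
        show "countable (\<xi> ` {\<theta>. \<xi> \<theta> \<in> D})" using cD unfolding D_def
          by (rule countable_subset[rotated]) (auto simp: D_def)
        show "inj_on \<xi> {\<theta>. \<xi> \<theta> \<in> D}" using injxi by (simp add: inj_on_def inj_def)
      qed
      have claimC: "finite {b. \<Theta> b = \<theta>}" for \<theta>
      proof -
        define S where "S = {g. act g \<theta> \<in> D}"
        define E where "E = germ_rel act \<theta> \<inter> S \<times> S"
        define Q where "Q = S // E"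
        have finQ: "finite Q" unfolding Q_def S_def E_def D_def
          using finite_germ_classes[OF ga jc finD laf] .
        have eqE: "equiv S E" unfolding E_def by (rule germ_equiv)
        define \<Phi> where "\<Phi> = (\<lambda>b. {C \<in> Q. \<exists>g\<in>C. Y b g \<in> V1})"
        have half: "Y b' (gs m) \<in> V1" if "\<Theta> b = \<theta>" "\<Theta> b' = \<theta>" "\<Phi> b = \<Phi> b'" "Y b (gs m) \<in> V1" for b b' m
        proof (cases "act (gs m) \<theta> \<in> D")
          case True
          then have gS: "gs m \<in> S" unfolding S_def by simp
          define C where "C = E `` {gs m}"
          have CQ: "C \<in> Q" unfolding Q_def C_def using gS by (rule quotientI)
          have "gs m \<in> C" unfolding C_def using equiv_class_self[OF eqE gS] .
          then have "C \<in> \<Phi> b" using CQ that(4) unfolding \<Phi>_def by blast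
          then have "C \<in> \<Phi> b'" using that(3) by simp
          then obtain g where "g \<in> C" "Y b' g \<in> V1" unfolding \<Phi>_def by blast
          then have "(gs m, g) \<in> germ_rel act (\<Theta> b')" using that(2) unfolding C_def E_def by auto
          then have "Y b' (gs m) = Y b' g" by (rule \<Theta>2)
          then show ?thesis using \<open>Y b' g \<in> V1\<close> by simp
        next
          case False
          have "Y b (gs m) \<in> fiber F (act (gs m) \<theta>)" "Y b' (gs m) \<in> fiber F (act (gs m) \<theta>)"
            using \<Theta>1[of "gs m" b] \<Theta>1[of "gs m" b'] that(1,2) unfolding fiber_def by auto
          then have "Y b (gs m) = Y b' (gs m)" using subs False by blast
          then show ?thesis using that(4) by simp
        qed
        have "inj_on \<Phi> {b. \<Theta> b = \<theta>}"
        proof (rule inj_onI)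
          fix b b' assume bb: "b \<in> {b. \<Theta> b = \<theta>}" "b' \<in> {b. \<Theta> b = \<theta>}" "\<Phi> b = \<Phi> b'"
          have "alt b m = alt b' m" for m
            using half[of b b' m] half[of b' b m] bb unfolding valt[symmetric] by auto
          then have "alt b (2 * n) = alt b' (2 * n)" for n by blast
          then show "b = b'" unfolding alt_def by auto
        qed
        moreover have "\<Phi> ` {b. \<Theta> b = \<theta>} \<subseteq> Pow Q" unfolding \<Phi>_def by auto
        then have "finite (\<Phi> ` {b. \<Theta> b = \<theta>})" using finQ by (meson finite_Pow_iff finite_subset)
        ultimately show ?thesis using finite_imageD by blast
      qed
      have "(UNIV :: (nat \<Rightarrow> bool) set) = (\<Union>\<theta>\<in>{\<theta>. \<xi> \<theta> \<in> D}. {b. \<Theta> b = \<theta>})"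
        using claimA by auto
      moreover have "countable (\<Union>\<theta>\<in>{\<theta>. \<xi> \<theta> \<in> D}. {b. \<Theta> b = \<theta>})"
        by (rule countable_UN[OF cnt]) (simp add: countable_finite claimC)
      ultimately show False using uncountable_bool_seq by simp
    qed
  qed
qed

end
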